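(* Let $C$ be a convex subset of a topological vector space and let $f,g:C\to\mathbb{R}$ be continuous functions such that $g$ is convex and non-negative, $0$ belongs to the image of $g$, and $g^{-1}(0)\subseteq f^{-1}(0)$. Let $\lambda\ge 0$ and consider the problem of minimising $g(v)$ over $v\in C$ subject to $f(v)\ge\lambda$. Then every minimiser $v$ of this problem satisfies $f(v)=\lambda$; in other words, the set of minimisers of $g$ over $\{v\in C: f(v)\ge\lambda\}$ coincides with the set of minimisers of $g$ over $\{v\in C: f(v)=\lambda\}$. *)

theory Defs
  imports "HOL-Analysis.Analysis"
begin

text \<open>Real topological vector spaces: a real vector space with a topology in which
  vector addition and scalar multiplication are (jointly) continuous; joint continuity is stated via the
  product of neighbourhood filters, which is the neighbourhood filter of the product topology.\<close>
class topological_real_vector = real_vector + topological_space +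
  assumes tendsto_add_tvs:
    "filterlim (\<lambda>p :: 'a \<times> 'a. fst p + snd p) (nhds (a + b)) (nhds a \<times>\<^sub>F nhds b)"
  assumes tendsto_scaleR_tvs:
    "filterlim (\<lambda>p :: real \<times> 'a. fst p *\<^sub>R snd p) (nhds (c *\<^sub>R a)) (nhds c \<times>\<^sub>F nhds a)"

instance real_normed_vector \<subseteq> topological_real_vector
  proof
  fix a b :: 'a and c :: real
  show "filterlim (\<lambda>p :: 'a \<times> 'a. fst p + snd p) (nhds (a + b)) (nhds a \<times>\<^sub>F nhds b)"
    unfolding nhds_prod[symmetric] using tendsto_fst[OF filterlim_ident, of "(a, b)"] tendsto_snd[OF filterlim_ident, of "(a, b)"]
    by (intro tendsto_intros) simp_all
  show "filterlim (\<lambda>p :: real \<times> 'a. fst p *\<^sub>R snd p) (nhds (c *\<^sub>R a)) (nhds c \<times>\<^sub>F nhds a)"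
    unfolding nhds_prod[symmetric] using tendsto_fst[OF filterlim_ident, of "(c, a)"] tendsto_snd[OF filterlim_ident, of "(c, a)"]
    by (intro tendsto_intros) simp_all
qed

definition argmin_on :: "('a \<Rightarrow> real) \<Rightarrow> 'a set \<Rightarrow> 'a set" where
  "argmin_on g S = {v \<in> S. \<forall>u \<in> S. g v \<le> g u}"

end

theory Submission
  imports Defs
begin

lemma tvs_add:
  fixes X Y :: "'b \<Rightarrow> 'a::topological_real_vector"
  assumes "(X \<longlongrightarrow> a) F" "(Y \<longlongrightarrow> b) F"
  shows "((\<lambda>x. X x + Y x) \<longlongrightarrow> a + b) F"
proof -
  have "filterlim (\<lambda>x. (X x, Y x)) (nhds a \<times>\<^sub>F nhds b) F"
    using tendsto_Pair[OF assms] by (simp add: nhds_prod)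
  from filterlim_compose[OF tendsto_add_tvs this] show ?thesis by simp
qed

lemma tvs_scaleR:
  fixes Y :: "'b \<Rightarrow> 'a::topological_real_vector"
  assumes "(X \<longlongrightarrow> c) F" "(Y \<longlongrightarrow> b) F"
  shows "((\<lambda>x. X x *\<^sub>R Y x) \<longlongrightarrow> c *\<^sub>R b) F"
proof -
  have "filterlim (\<lambda>x. (X x, Y x)) (nhds c \<times>\<^sub>F nhds b) F"
    using tendsto_Pair[OF assms] by (simp add: nhds_prod)
  from filterlim_compose[OF tendsto_scaleR_tvs this] show ?thesis by simp
qed

lemma tvs_path_cont:
  fixes a b :: "'a::topological_real_vector"
  shows "continuous_on S (\<lambda>t::real. a + t *\<^sub>R b)"
  unfolding continuous_on_def
proof
  fix x assume "x \<in> S"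
  have "((\<lambda>t::real. a + t *\<^sub>R b) \<longlongrightarrow> a + x *\<^sub>R b) (at x within S)"
    by (intro tvs_add tvs_scaleR tendsto_const tendsto_ident_at)
  then show "((\<lambda>t::real. a + t *\<^sub>R b) \<longlongrightarrow> a + x *\<^sub>R b) (at x within S)" .
qed

lemma key:
  fixes C :: "'a::topological_real_vector set"
    and f g :: "'a \<Rightarrow> real"
  assumes "convex C" "continuous_on C f" "convex_on C g"
    and "w \<in> C" "g w = 0" "f w = 0" "u \<in> C" "f u \<ge> lam" "lam \<ge> 0"
  shows "\<exists>t. 0 \<le> t \<and> t \<le> 1 \<and> u + t *\<^sub>R (w - u) \<in> C \<and> f (u + t *\<^sub>R (w - u)) = lam
     \<and> g (u + t *\<^sub>R (w - u)) \<le> (1 - t) * g u \<and> (f u > lam \<longrightarrow> t > 0)"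
proof -
  define p where "p = (\<lambda>t::real. u + t *\<^sub>R (w - u))"
  have pC: "p t \<in> C" if "0 \<le> t" "t \<le> 1" for t
  proof -
    have "p t = (1 - t) *\<^sub>R u + t *\<^sub>R w" unfolding p_def by (simp add: algebra_simps)
    then show ?thesis using assms(1,4,7) that by (simp add: convex_def)
  qed
  have "continuous_on {0..1} p" unfolding p_def by (rule tvs_path_cont)
  moreover have "p ` {0..1} \<subseteq> C" using pC by auto
  ultimately have "continuous_on {0..1} (f \<circ> p)"
    using assms(2) continuous_on_compose continuous_on_subset by blast
  then obtain t where t: "0 \<le> t" "t \<le> 1" "(f \<circ> p) t = lam"
    using IVT2'[of "f \<circ> p" 1 lam 0] assms by (auto simp: p_def)
  have "g (p t) = g ((1 - t) *\<^sub>R u + t *\<^sub>R w)" unfolding p_def by (simp add: algebra_simps)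
  also have "\<dots> \<le> (1 - t) * g u + t * g w"
    using assms(3,4,7) t by (intro convex_onD) auto
  finally have g: "g (p t) \<le> (1 - t) * g u" using assms(5) by simp
  have "f u > lam \<longrightarrow> t > 0" using t by (cases "t = 0") (auto simp: p_def)
  then show ?thesis using t g pC unfolding p_def by auto
qed

theorem lemma4:
  fixes C :: "'a::topological_real_vector set"
    and f g :: "'a \<Rightarrow> real"
    and lam :: real
  assumes "convex C"
    and "continuous_on C f"
    and "continuous_on C g"
    and "convex_on C g"
    and "\<And>v. v \<in> C \<Longrightarrow> g v \<ge> 0"
    and "0 \<in> g ` C"
    and "\<And>v. v \<in> C \<Longrightarrow> g v = 0 \<Longrightarrow> f v = 0"
    and "lam \<ge> 0"
  shows "(\<forall>v \<in> argmin_on g {v \<in> C. f v \<ge> lam}. f v = lam)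
       \<and> argmin_on g {v \<in> C. f v \<ge> lam} = argmin_on g {v \<in> C. f v = lam}"
proof -
  obtain w where w: "w \<in> C" "g w = 0" using assms(6) by auto
  have fw: "f w = 0" using assms(7) w by auto
  have P1: "f v = lam" if v: "v \<in> argmin_on g {v \<in> C. f v \<ge> lam}" for v
  proof (rule ccontr)
    assume ne: "f v \<noteq> lam"
    have vC: "v \<in> C" "f v \<ge> lam" and mn: "\<And>u. u \<in> C \<Longrightarrow> f u \<ge> lam \<Longrightarrow> g v \<le> g u"
      using v by (auto simp: argmin_on_def)
    obtain t where t: "0 \<le> t" "t \<le> 1" "v + t *\<^sub>R (w - v) \<in> C" "f (v + t *\<^sub>R (w - v)) = lam"
      "g (v + t *\<^sub>R (w - v)) \<le> (1 - t) * g v" "f v > lam \<longrightarrow> t > 0"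
      using key[OF assms(1,2,4) w fw vC assms(8)] by blast
    have "g v \<le> (1 - t) * g v" using mn[OF t(3)] t(4,5) by simp
    moreover have "t > 0" using t(6) ne vC(2) by simp
    ultimately have "g v \<le> 0" by (simp add: algebra_simps) (metis mult_le_0_iff not_le)
    then have "g v = 0" using assms(5) vC by (meson antisym)
    then have "f v = 0" using assms(7) vC by auto
    then show False using ne vC assms(8) by simp
  qed
  have S1: "argmin_on g {v \<in> C. f v \<ge> lam} \<subseteq> argmin_on g {v \<in> C. f v = lam}"
    using P1 by (force simp: argmin_on_def)
  have S2: "argmin_on g {v \<in> C. f v = lam} \<subseteq> argmin_on g {v \<in> C. f v \<ge> lam}"
  proof
    fix v assume v: "v \<in> argmin_on g {v \<in> C. f v = lam}"
    have vC: "v \<in> C" "f v = lam" and mn: "\<And>u. u \<in> C \<Longrightarrow> f u = lam \<Longrightarrow> g v \<le> g u"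
      using v by (auto simp: argmin_on_def)
    have "g v \<le> g u" if u: "u \<in> C" "f u \<ge> lam" for u
    proof -
      obtain t where t: "0 \<le> t" "t \<le> 1" "u + t *\<^sub>R (w - u) \<in> C" "f (u + t *\<^sub>R (w - u)) = lam"
        "g (u + t *\<^sub>R (w - u)) \<le> (1 - t) * g u"
        using key[OF assms(1,2,4) w fw u assms(8)] by blast
      have "(1 - t) * g u \<le> g u" using t assms(5)[OF u(1)] by (simp add: mult_left_le_one_le)
      then show ?thesis using mn[OF t(3,4)] t(5) by linarith
    qed
    then show "v \<in> argmin_on g {v \<in> C. f v \<ge> lam}" using vC by (auto simp: argmin_on_def)
  qed
  show ?thesis using P1 S1 S2 by blast
qed

end
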